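(* Let $0\le x_1<\dots<x_n\le1$, let $r\in\{1,\dots,n-1\}$, and let $R:[0,1]\to\mathbb R$ be smooth and nonvanishing. Then: (a) $\tilde{\mathcal C}_{r,R}=\mathcal C_{r,R}$. (b) If $\mathbf f=(F(x_1),\dots,F(x_n))'$ where $F$ is such that $RF$ is $r$ times differentiable, then for each $\mathbf i=(i_1,\dots,i_{r+1})\in\mathcal I_r$ there exists $c_{\mathbf i}\in]x_{i_1},x_{i_{r+1}}[$ such that $$\phi_{\mathbf i}(R\star\mathbf f)=\frac{\Lambda(F)(c_{\mathbf i})}{r!}\,\phi_{\mathbf i}(\mathbf x^r).$$ (c) For every $J\subset\{1,\dots,n\}$ with at least $r+1$ elements and every $\mathbf f\in\mathbb R^n$, $$-\langle\mathbf f,\mathbf t_J^*\rangle=N_J^{-1}\sum_{\mathbf i\in\mathcal I_r\cap J^{r+1}}\phi_{\mathbf i}(R\star\mathbf f)\,\phi_{\mathbf i}(\mathbf x^r),$$ where $N_J=\mathrm{Gram}(\mathbf 1_J,\mathbf x_J,\dots,\mathbf x_J^{r-1})\,\gamma_J$.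
   Context: $\mathbf x=(x_1,\dots,x_n)'$; for $\mathbf w\in\mathbb R^n$, $(R\star\mathbf w)_i=R(x_i)w_i$, $\mathbf w^k$ is the coordinatewise $k$-th power ($\mathbf w^0=\mathbf 1$), $\mathbf w_J$ agrees with $\mathbf w$ on $J$ and is $0$ elsewhere, $\mathbf 1_J$ is the indicator of $J$. $\mathcal I_r=\{(i_1,\dots,i_{r+1}):\ 1\le i_1<\dots<i_{r+1}\le n\}$ and, for $\mathbf i\in\mathcal I_r$, $\phi_{\mathbf i}(\mathbf v)$ is the determinant of the $(r+1)\times(r+1)$ matrix whose $m$-th row is $(1,x_{i_m},\dots,x_{i_m}^{r-1},v_{i_m})$. For $i\in\{1,\dots,n-r\}$, $\phi_{i,r}=\phi_{(i,i+1,\dots,i+r)}$. $\tilde{\mathcal C}_{r,R}=\{\mathbf f\in\mathbb R^n:\ \phi_{\mathbf i}(R\star\mathbf f)\ge0\ \forall\mathbf i\in\mathcal I_r\}$ and $\mathcal C_{r,R}=\{\mathbf f\in\mathbb R^n:\ \phi_{i,r}(R\star\mathbf f)\ge0\ \forall i\in\{1,\dots,n-r\}\}$. $\Lambda(F)(x)=\frac{d^r}{dx^r}[R(x)F(x)]$. $\mathrm{Gram}(\mathbf w^1,\dots,\mathbf w^q)=\det(\langle\mathbf w^i,\mathbf w^j\rangle)_{1\le i,j\le q}$. $\mathcal X_J=\mathrm{span}\{\mathbf 1_J,\mathbf x_J,\dots,\mathbf x_J^{r-1}\}$, $\Pi_{\mathcal X_J}$ the orthogonal projection onto it, $\gamma_J=\|R\star(\mathbf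 x_J^r-\Pi_{\mathcal X_J}\mathbf x_J^r)\|$ and $\mathbf t_J^*=-R\star(\mathbf x_J^r-\Pi_{\mathcal X_J}\mathbf x_J^r)/\gamma_J$. *)

theory Defs
  imports "HOL-Analysis.Analysis"
begin

text \<open>Vectors of R^n are represented as functions nat => real, with coordinates
  indexed by 1..n (values outside 1..n are irrelevant / zero).\<close>

definition vecs :: "nat \<Rightarrow> (nat \<Rightarrow> real) set" where
  "vecs n = {f. \<forall>i. i \<notin> {1..n} \<longrightarrow> f i = 0}"

definition inner_n :: "nat \<Rightarrow> (nat \<Rightarrow> real) \<Rightarrow> (nat \<Rightarrow> real) \<Rightarrow> real" where
  "inner_n n u v = (\<Sum>i=1..n. u i * v i)"

definition norm_n :: "nat \<Rightarrow> (nat \<Rightarrow> real) \<Rightarrow> real" where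
  "norm_n n u = sqrt (inner_n n u u)"

definition detn :: "nat \<Rightarrow> (nat \<Rightarrow> nat \<Rightarrow> real) \<Rightarrow> real" where
  "detn m A = (\<Sum>p | p permutes {0..<m}. of_int (sign p) * (\<Prod>i<m. A i (p i)))"

definition star :: "(real \<Rightarrow> real) \<Rightarrow> (nat \<Rightarrow> real) \<Rightarrow> (nat \<Rightarrow> real) \<Rightarrow> (nat \<Rightarrow> real)" where
  "star R x w = (\<lambda>i. R (x i) * w i)"

definition Ir :: "nat \<Rightarrow> nat \<Rightarrow> nat list set" where
  "Ir n r = {is. length is = Suc r \<and> sorted_wrt (<) is \<and> set is \<subseteq> {1..n}}"

definition phi :: "(nat \<Rightarrow> real) \<Rightarrow> nat \<Rightarrow> nat list \<Rightarrow> (nat \<Rightarrow> real) \<Rightarrow> real" where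
  "phi x r is v = detn (Suc r) (\<lambda>m k. if k < r then x (is ! m) ^ k else v (is ! m))"

definition phi_cons :: "(nat \<Rightarrow> real) \<Rightarrow> nat \<Rightarrow> nat \<Rightarrow> (nat \<Rightarrow> real) \<Rightarrow> real" where
  "phi_cons x r i v = phi x r [i..<i + Suc r] v"

definition Ctilde :: "nat \<Rightarrow> (nat \<Rightarrow> real) \<Rightarrow> nat \<Rightarrow> (real \<Rightarrow> real) \<Rightarrow> (nat \<Rightarrow> real) set" where
  "Ctilde n x r R = {f \<in> vecs n. \<forall>is \<in> Ir n r. phi x r is (star R x f) \<ge> 0}"

definition Ccons :: "nat \<Rightarrow> (nat \<Rightarrow> real) \<Rightarrow> nat \<Rightarrow> (real \<Rightarrow> real) \<Rightarrow> (nat \<Rightarrow> real) set" where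
  "Ccons n x r R = {f \<in> vecs n. \<forall>i \<in> {1..n-r}. phi_cons x r i (star R x f) \<ge> 0}"

definition vpow :: "(nat \<Rightarrow> real) \<Rightarrow> nat \<Rightarrow> (nat \<Rightarrow> real)" where
  "vpow x k = (\<lambda>i. x i ^ k)"

definition restr :: "nat set \<Rightarrow> (nat \<Rightarrow> real) \<Rightarrow> (nat \<Rightarrow> real)" where
  "restr J w = (\<lambda>i. if i \<in> J then w i else 0)"

definition XJ :: "(nat \<Rightarrow> real) \<Rightarrow> nat \<Rightarrow> nat set \<Rightarrow> (nat \<Rightarrow> real) set" where
  "XJ x r J = {v. \<exists>a. v = (\<lambda>i. \<Sum>k<r. a k * restr J (vpow x k) i)}"

definition proj_n :: "nat \<Rightarrow> (nat \<Rightarrow> real) set \<Rightarrow> (nat \<Rightarrow> real) \<Rightarrow> (nat \<Rightarrow> real)" where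
  "proj_n n S u = (THE p. p \<in> S \<and> (\<forall>v \<in> S. inner_n n (\<lambda>i. u i - p i) v = 0))"

definition residJ :: "nat \<Rightarrow> (nat \<Rightarrow> real) \<Rightarrow> nat \<Rightarrow> (real \<Rightarrow> real) \<Rightarrow> nat set \<Rightarrow> (nat \<Rightarrow> real)" where
  "residJ n x r R J = star R x (\<lambda>i. restr J (vpow x r) i - proj_n n (XJ x r J) (restr J (vpow x r)) i)"

definition gammaJ :: "nat \<Rightarrow> (nat \<Rightarrow> real) \<Rightarrow> nat \<Rightarrow> (real \<Rightarrow> real) \<Rightarrow> nat set \<Rightarrow> real" where
  "gammaJ n x r R J = norm_n n (residJ n x r R J)"

definition tJ :: "nat \<Rightarrow> (nat \<Rightarrow> real) \<Rightarrow> nat \<Rightarrow> (real \<Rightarrow> real) \<Rightarrow> nat set \<Rightarrow> (nat \<Rightarrow> real)" where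
  "tJ n x r R J = (\<lambda>i. - residJ n x r R J i / gammaJ n x r R J)"

definition gram :: "nat \<Rightarrow> nat \<Rightarrow> (nat \<Rightarrow> nat \<Rightarrow> real) \<Rightarrow> real" where
  "gram n q w = detn q (\<lambda>i j. inner_n n (w i) (w j))"

definition NJ :: "nat \<Rightarrow> (nat \<Rightarrow> real) \<Rightarrow> nat \<Rightarrow> (real \<Rightarrow> real) \<Rightarrow> nat set \<Rightarrow> real" where
  "NJ n x r R J = gram n r (\<lambda>k. restr J (vpow x k)) * gammaJ n x r R J"

text \<open>Smoothness (C^infinity) on [0,1]: a sequence of successive one-sided-at-the-ends derivatives.\<close>
definition smooth01 :: "(real \<Rightarrow> real) \<Rightarrow> bool" where
  "smooth01 R = (\<exists>D. D 0 = R \<and>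
     (\<forall>k. \<forall>t\<in>{0..1}. (D k has_real_derivative D (Suc k) t) (at t within {0..1})))"

end

theory Submission
  imports Defs "Jordan_Normal_Form.Determinant"
begin

definition M :: "nat \<Rightarrow> (nat \<Rightarrow> nat \<Rightarrow> real) \<Rightarrow> real mat" where
  "M m A = Matrix.mat m m (\<lambda>(i,j). A i j)"

lemma M_carrier[simp]: "M m A \<in> carrier_mat m m"
  by (simp add: M_def)

lemma M_index[simp]: "i < m \<Longrightarrow> j < m \<Longrightarrow> M m A $$ (i,j) = A i j"
  by (simp add: M_def)

lemma M_dims[simp]: "dim_row (M m A) = m" "dim_col (M m A) = m"
  by (auto simp: M_def)

lemma detn_det: "detn m A = Determinant.det (M m A)"
proof -
  have "detn m A = (\<Sum>p\<in>{p. p permutes {0..<m}}. signof p * (\<Prod>i = 0..<m. M m A $$ (i, p i)))"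
    unfolding detn_def
  proof (rule sum.cong)
    fix p assume "p \<in> {p. p permutes {0..<m}}"
    hence p: "p permutes {0..<m}" by simp
    have "(\<Prod>i<m. A i (p i)) = (\<Prod>i = 0..<m. M m A $$ (i, p i))"
      using permutes_in_image[OF p] by (auto simp: atLeast0LessThan intro!: prod.cong)
    thus "of_int (sign p) * (\<Prod>i<m. A i (p i)) = signof p * (\<Prod>i = 0..<m. M m A $$ (i, p i))"
      by simp
  qed (auto simp: atLeast0LessThan)
  also have "\<dots> = Determinant.det (M m A)"
    by (rule det_def'[symmetric]) simp
  finally show ?thesis .
qed

lemma detn_cong: "(\<And>i k. i < m \<Longrightarrow> k < m \<Longrightarrow> A i k = B i k) \<Longrightarrow> detn m A = detn m B"
  unfolding detn_det M_def by (rule arg_cong[where f=Determinant.det]) (auto intro!: eq_matI)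

lemma detn_rows_eq:
  assumes "i < m" "j < m" "i \<noteq> j" "\<And>k. k < m \<Longrightarrow> A i k = A j k"
  shows "detn m A = 0"
  unfolding detn_det
  by (rule det_identical_rows[OF M_carrier assms(3,1,2)]) (auto intro!: eq_vecI simp: assms(1,2,4))

lemma detn_cols_eq:
  assumes "i < m" "j < m" "i \<noteq> j" "\<And>k. k < m \<Longrightarrow> A k i = A k j"
  shows "detn m A = 0"
  unfolding detn_det
  by (rule det_identical_columns[OF M_carrier assms(3,1,2)]) (auto intro!: eq_vecI simp: assms(1,2,4))

lemma detn_transpose: "detn m (\<lambda>i k. A k i) = detn m A"
proof -
  have "M m (\<lambda>i k. A k i) = transpose_mat (M m A)"
    by (auto intro!: eq_matI)
  thus ?thesis unfolding detn_det using det_transpose[OF M_carrier] by simp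
qed

lemma detn_permute_rows:
  assumes p: "p permutes {0..<m}"
  shows "detn m (\<lambda>i k. A (p i) k) = of_int (sign p) * detn m A"
proof -
  have "M m (\<lambda>i k. A (p i) k) = Matrix.mat m m (\<lambda>(i,j). M m A $$ (p i, j))"
  proof (rule eq_matI)
    fix i j assume ij: "i < dim_row (Matrix.mat m m (\<lambda>(i,j). M m A $$ (p i, j)))"
      "j < dim_col (Matrix.mat m m (\<lambda>(i,j). M m A $$ (p i, j)))"
    hence "i < m" "j < m" by auto
    moreover have "p i < m" using permutes_in_image[OF p] \<open>i < m\<close> by auto
    ultimately show "M m (\<lambda>i k. A (p i) k) $$ (i, j) = Matrix.mat m m (\<lambda>(i,j). M m A $$ (p i, j)) $$ (i, j)"
      by simp
  qed auto
  thus ?thesis unfolding detn_det using det_permute_rows[OF M_carrier p] by simp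
qed

lemma detn_scale_rows: "detn m (\<lambda>i k. c i * A i k) = (\<Prod>i<m. c i) * detn m A"
  unfolding detn_def
  by (simp add: prod.distrib sum_distrib_left mult.assoc mult.left_commute)

lemma cofactor_cong:
  assumes "c < m" "i < m" "\<And>a b. a < m \<Longrightarrow> b < m \<Longrightarrow> b \<noteq> c \<Longrightarrow> A a b = B a b"
  shows "cofactor (M m A) i c = cofactor (M m B) i c"
proof -
  have "mat_delete (M m A) i c = mat_delete (M m B) i c"
    using assms by (auto intro!: eq_matI simp: mat_delete_def)
  thus ?thesis by (simp add: cofactor_def)
qed

lemma detn_col_expand:
  assumes "c < m"
  shows "detn m A = (\<Sum>i<m. A i c * cofactor (M m A) i c)"
  unfolding detn_det using laplace_expansion_column[OF M_carrier assms] assms by simp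

lemma detn_linear_col:
  assumes c: "c < m"
  shows "detn m (\<lambda>i k. if k = c then a * u i + v i else A i k)
       = a * detn m (\<lambda>i k. if k = c then u i else A i k) + detn m (\<lambda>i k. if k = c then v i else A i k)"
proof -
  let ?C = "\<lambda>i. cofactor (M m (\<lambda>i k. if k = c then u i else A i k)) i c"
  have e1: "cofactor (M m (\<lambda>i k. if k = c then a * u i + v i else A i k)) i c = ?C i" if "i < m" for i
    by (rule cofactor_cong) (use c that in auto)
  have e2: "cofactor (M m (\<lambda>i k. if k = c then v i else A i k)) i c = ?C i" if "i < m" for i
    by (rule cofactor_cong) (use c that in auto)
  show ?thesis
    apply (subst (1 2 3) detn_col_expand[OF c])
    apply (simp add: e1 e2 sum_distrib_left distrib_right sum.distrib mult.assoc)
    done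
qed

lemma detn_last_col_zero:
  assumes "\<And>i. i < m \<Longrightarrow> A i m = 0"
  shows "detn (Suc m) A = A m m * detn m A"
proof -
  have "detn (Suc m) A = (\<Sum>i<Suc m. A i m * cofactor (M (Suc m) A) i m)"
    by (rule detn_col_expand) simp
  also have "\<dots> = A m m * cofactor (M (Suc m) A) m m"
  proof -
    have "(\<Sum>i<m. A i m * cofactor (M (Suc m) A) i m) = 0"
      by (rule sum.neutral) (simp add: assms)
    thus ?thesis by (simp only: sum.lessThan_Suc)
  qed
  also have "mat_delete (M (Suc m) A) m m = M m A"
    by (auto intro!: eq_matI simp: mat_delete_def)
  hence "cofactor (M (Suc m) A) m m = detn m A"
    by (simp add: cofactor_def detn_det)
  finally show ?thesis by simp
qed

lemma detn_0[simp]: "detn 0 A = 1"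
  unfolding detn_det by (rule det_dim_zero) simp

lemma detn_first_col:
  assumes "\<And>i. 0 < i \<Longrightarrow> i < Suc m \<Longrightarrow> A i 0 = 0"
  shows "detn (Suc m) A = A 0 0 * detn m (\<lambda>i k. A (Suc i) (Suc k))"
proof -
  have "detn (Suc m) A = (\<Sum>i<Suc m. A i 0 * cofactor (M (Suc m) A) i 0)"
    by (rule detn_col_expand) simp
  also have "\<dots> = A 0 0 * cofactor (M (Suc m) A) 0 0"
  proof -
    have "(\<Sum>i\<in>{1..<Suc m}. A i 0 * cofactor (M (Suc m) A) i 0) = 0"
      by (rule sum.neutral) (simp add: assms)
    moreover have "{..<Suc m} = insert 0 {1..<Suc m}" by auto
    ultimately show ?thesis by simp
  qed
  also have "mat_delete (M (Suc m) A) 0 0 = M m (\<lambda>i k. A (Suc i) (Suc k))"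
    by (auto intro!: eq_matI simp: mat_delete_def)
  hence "cofactor (M (Suc m) A) 0 0 = detn m (\<lambda>i k. A (Suc i) (Suc k))"
    by (simp add: cofactor_def detn_det)
  finally show ?thesis by simp
qed

lemma vdm_step:
  "detn (Suc m) (\<lambda>i k. y i ^ k) = (\<Prod>i<m. y (Suc i) - y 0) * detn m (\<lambda>i k. y (Suc i) ^ k)"
proof -
  define U where "U = M (Suc m) (\<lambda>l k. (if l = k then 1 else 0) + (if Suc l = k then - y 0 else 0))"
  define B where "B = (\<lambda>i k. if k = 0 then 1 else y i ^ (k - 1) * (y i - y 0))"
  have Uc: "U \<in> carrier_mat (Suc m) (Suc m)" by (simp add: U_def)
  have "upper_triangular U" unfolding upper_triangular_def U_def by auto
  hence dU: "Determinant.det U = 1"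
    by (subst det_upper_triangular[OF _ Uc]) (auto simp: prod_list_diag_prod U_def)
  have AU: "M (Suc m) (\<lambda>i k. y i ^ k) * U = M (Suc m) B"
  proof (rule eq_matI)
    fix i k assume "i < dim_row (M (Suc m) B)" "k < dim_col (M (Suc m) B)"
    hence ik: "i < Suc m" "k < Suc m" by auto
    have "(M (Suc m) (\<lambda>i k. y i ^ k) * U) $$ (i,k)
        = (\<Sum>l\<in>{0..<Suc m}. y i ^ l * ((if l = k then 1 else 0) + (if Suc l = k then - y 0 else 0)))"
      using ik by (simp add: U_def scalar_prod_def)
    also have "\<dots> = (\<Sum>l\<in>{0..<Suc m}. if l = k then y i ^ l else 0)
        + (\<Sum>l\<in>{0..<Suc m}. if Suc l = k then - y 0 * y i ^ l else 0)"
      by (subst sum.distrib[symmetric], rule sum.cong) auto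
    also have "(\<Sum>l\<in>{0..<Suc m}. if l = k then y i ^ l else 0) = y i ^ k"
      using ik by (simp add: sum.delta')
    also have "(\<Sum>l\<in>{0..<Suc m}. if Suc l = k then - y 0 * y i ^ l else 0)
       = (if k = 0 then 0 else - y 0 * y i ^ (k - 1))"
    proof (cases k)
      case 0 thus ?thesis by simp
    next
      case (Suc k')
      have "(\<Sum>l\<in>{0..<Suc m}. if Suc l = k then - y 0 * y i ^ l else 0)
          = (\<Sum>l\<in>{0..<Suc m}. if l = k' then - y 0 * y i ^ l else 0)"
        by (rule sum.cong) (auto simp: Suc)
      also have "\<dots> = - y 0 * y i ^ k'" using ik Suc by (simp add: sum.delta')
      finally show ?thesis using Suc by simp
    qed
    also have "y i ^ k + (if k = 0 then 0 else - y 0 * y i ^ (k - 1)) = B i k"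
      unfolding B_def by (cases k) (auto simp: algebra_simps)
    finally show "(M (Suc m) (\<lambda>i k. y i ^ k) * U) $$ (i,k) = M (Suc m) B $$ (i,k)"
      using ik by simp
  qed (auto simp: U_def)
  have "detn (Suc m) (\<lambda>i k. y i ^ k) = detn (Suc m) B"
    unfolding detn_det using det_mult[OF M_carrier Uc, of "\<lambda>i k. y i ^ k"] dU AU by simp
  also have "\<dots> = detn (Suc m) (\<lambda>i k. B k i)" by (rule detn_transpose[symmetric])
  also have "\<dots> = B 0 0 * detn m (\<lambda>i k. B (Suc k) (Suc i))"
    by (rule detn_first_col) (simp add: B_def)
  also have "detn m (\<lambda>i k. B (Suc k) (Suc i)) = detn m (\<lambda>i k. B (Suc i) (Suc k))"
    by (rule detn_transpose)
  also have "\<dots> = detn m (\<lambda>i k. (y (Suc i) - y 0) * y (Suc i) ^ k)"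
    by (simp add: B_def mult.commute)
  also have "\<dots> = (\<Prod>i<m. y (Suc i) - y 0) * detn m (\<lambda>i k. y (Suc i) ^ k)"
    by (rule detn_scale_rows)
  finally show ?thesis by (simp add: B_def)
qed

lemma vdm_pos:
  "(\<And>i j. i < j \<Longrightarrow> j < m \<Longrightarrow> y i < y j) \<Longrightarrow> 0 < detn m (\<lambda>i k. (y i :: real) ^ k)"
proof (induction m arbitrary: y)
  case 0 thus ?case by simp
next
  case (Suc m)
  have "0 < detn m (\<lambda>i k. y (Suc i) ^ k)"
    by (rule Suc.IH) (use Suc.prems in auto)
  moreover have "0 < (\<Prod>i<m. y (Suc i) - y 0)"
    by (rule prod_pos) (use Suc.prems in auto)
  ultimately show ?case by (simp add: vdm_step)
qed

lemma sorted_list_eqI: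
  fixes xs ys :: "'a::linorder list"
  assumes "sorted_wrt (<) xs" "sorted_wrt (<) ys" "set xs = set ys"
  shows "xs = ys"
proof -
  have "xs = sorted_list_of_set (set xs)"
    using assms(1) by (simp add: strict_sorted_iff sorted_list_of_set.idem_if_sorted_distinct)
  also have "\<dots> = sorted_list_of_set (set ys)" using assms(3) by simp
  also have "\<dots> = ys"
    using assms(2) by (simp add: strict_sorted_iff sorted_list_of_set.idem_if_sorted_distinct)
  finally show ?thesis .
qed

lemma cauchy_binet:
  fixes A B :: "nat \<Rightarrow> nat \<Rightarrow> real" and J :: "nat set"
  assumes finJ: "finite J"
  shows "detn m (\<lambda>a b. \<Sum>j\<in>J. A j a * B j b)
    = (\<Sum>xs\<in>{xs. length xs = m \<and> sorted_wrt (<) xs \<and> set xs \<subseteq> J}.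
         detn m (\<lambda>i a. A (xs!i) a) * detn m (\<lambda>i b. B (xs!i) b))"
proof -
  define P where "P = {p. p permutes {0..<m}}"
  define Pi where "Pi = PiE {..<m} (\<lambda>_. J)"
  define Inj where "Inj = {f \<in> Pi. inj_on f {..<m}}"
  define L where "L = {xs. length xs = m \<and> sorted_wrt (<) xs \<and> set xs \<subseteq> J}"
  define h where "h = (\<lambda>(xs::nat list, s::nat \<Rightarrow> nat). (\<lambda>a. if a < m then xs ! (s a) else undefined))"
  define F where "F = (\<lambda>f. (\<Prod>a<m. A (f a) a) * detn m (\<lambda>a b. B (f a) b))"
  have finP: "finite P" unfolding P_def by (rule finite_permutations) simp
  have finPi: "finite Pi" unfolding Pi_def by (rule finite_PiE) (auto simp: finJ)
  have "detn m (\<lambda>a b. \<Sum>j\<in>J. A j a * B j b)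
      = (\<Sum>p\<in>P. of_int (sign p) * (\<Sum>f\<in>Pi. \<Prod>a<m. A (f a) a * B (f a) (p a)))"
    unfolding detn_def P_def Pi_def
    by (rule sum.cong[OF refl], subst prod_sum_PiE) (auto simp: finJ)
  also have "\<dots> = (\<Sum>f\<in>Pi. \<Sum>p\<in>P. (\<Prod>a<m. A (f a) a) * (of_int (sign p) * (\<Prod>a<m. B (f a) (p a))))"
    by (subst sum.swap) (simp add: sum_distrib_left prod.distrib mult_ac)
  also have "\<dots> = (\<Sum>f\<in>Pi. F f)"
    unfolding F_def detn_def P_def by (simp add: sum_distrib_left)
  also have "\<dots> = (\<Sum>f\<in>Inj. F f)"
  proof (rule sum.mono_neutral_right[OF finPi])
    show "Inj \<subseteq> Pi" unfolding Inj_def by auto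
    show "\<forall>f\<in>Pi - Inj. F f = 0"
    proof
      fix f assume "f \<in> Pi - Inj"
      hence "\<not> inj_on f {..<m}" unfolding Inj_def by auto
      then obtain a b where ab: "a < m" "b < m" "a \<noteq> b" "f a = f b"
        unfolding inj_on_def by auto
      have "detn m (\<lambda>a b. B (f a) b) = 0"
        by (rule detn_rows_eq[OF ab(1,2,3)]) (simp add: ab(4))
      thus "F f = 0" unfolding F_def by simp
    qed
  qed
  also have "\<dots> = (\<Sum>x\<in>L \<times> P. F (h x))"
  proof (rule sum.reindex_bij_betw[symmetric])
    show "bij_betw h (L \<times> P) Inj"
      unfolding bij_betw_def
    proof
      show "inj_on h (L \<times> P)"
      proof (rule inj_onI)
        fix x y assume x: "x \<in> L \<times> P" and y: "y \<in> L \<times> P" and eq0: "h x = h y"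
        obtain xs s where xd: "x = (xs, s)" by (cases x)
        obtain ys s' where yd: "y = (ys, s')" by (cases y)
        have in1: "(xs, s) \<in> L \<times> P" and in2: "(ys, s') \<in> L \<times> P" and eq: "h (xs, s) = h (ys, s')"
          using x y eq0 xd yd by auto
        have l: "length xs = m" "sorted_wrt (<) xs" "length ys = m" "sorted_wrt (<) ys"
          using in1 in2 unfolding L_def by auto
        have p: "s permutes {0..<m}" "s' permutes {0..<m}" using in1 in2 unfolding P_def by auto
        have eqa: "xs ! (s a) = ys ! (s' a)" if "a < m" for a
          using fun_cong[OF eq, of a] that unfolding h_def by simp
        have img: "set xs = (\<lambda>a. xs ! (t a)) ` {..<m}" if "length xs = m" "t permutes {0..<m}" for xs t
        proof -
          have "t ` {..<m} = {..<m}" using permutes_image[OF that(2)] by (simp add: atLeast0LessThan)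
          hence "(\<lambda>a. xs ! (t a)) ` {..<m} = (!) xs ` {..<m}" by (metis image_image)
          thus ?thesis using that(1) by (auto simp: set_conv_nth lessThan_def image_def)
        qed
        have "set xs = set ys"
          using img[OF l(1) p(1)] img[OF l(3) p(2)] eqa by (auto simp: image_def)
        hence iseq: "xs = ys" using sorted_list_eqI l by blast
        have "s = s'"
        proof
          fix a show "s a = s' a"
          proof (cases "a < m")
            case True
            have "s a < m" "s' a < m" using permutes_in_image[OF p(1)] permutes_in_image[OF p(2)] True by auto
            moreover have "distinct xs" using l strict_sorted_iff by blast
            ultimately show ?thesis using eqa[OF True] iseq l(1) nth_eq_iff_index_eq by metis
          next
            case False thus ?thesis using permutes_not_in[OF p(1)] permutes_not_in[OF p(2)] by simp
          qed
        qed
        thus "x = y" using iseq xd yd by simp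
      qed
    next
      show "h ` (L \<times> P) = Inj"
      proof
        show "h ` (L \<times> P) \<subseteq> Inj"
        proof clarify
          fix xs s assume "xs \<in> L" "s \<in> P"
          hence l: "length xs = m" "sorted_wrt (<) xs" "set xs \<subseteq> J" and p: "s permutes {0..<m}"
            unfolding L_def P_def by auto
          have sa: "s a < m" if "a < m" for a using permutes_in_image[OF p] that by auto
          have "h (xs, s) \<in> Pi" unfolding Pi_def h_def
            using l sa by (auto simp: PiE_iff extensional_def)
          moreover have "inj_on (h (xs, s)) {..<m}"
          proof (rule inj_onI)
            fix a b assume ab: "a \<in> {..<m}" "b \<in> {..<m}" "h (xs, s) a = h (xs, s) b"
            hence "xs ! (s a) = xs ! (s b)" unfolding h_def by simp
            moreover have "distinct xs" using l strict_sorted_iff by blast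
            ultimately have "s a = s b" using sa ab l(1) nth_eq_iff_index_eq by (metis lessThan_iff)
            thus "a = b" using permutes_inj[OF p] by (simp add: inj_eq)
          qed
          ultimately show "h (xs, s) \<in> Inj" unfolding Inj_def by simp
        qed
      next
        show "Inj \<subseteq> h ` (L \<times> P)"
        proof
          fix f assume "f \<in> Inj"
          hence fPi: "f \<in> Pi" and finj: "inj_on f {..<m}" unfolding Inj_def by auto
          define xs where "xs = sorted_list_of_set (f ` {..<m})"
          have setis: "set xs = f ` {..<m}" unfolding xs_def by simp
          have lenis: "length xs = m" unfolding xs_def using finj by (simp add: card_image)
          have sis: "sorted_wrt (<) xs" unfolding xs_def by (simp add: strict_sorted_iff)
          have "set xs \<subseteq> J" using fPi setis unfolding Pi_def by (auto simp: PiE_iff)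
          hence isL: "xs \<in> L" unfolding L_def using lenis sis by simp
          define s where "s = (\<lambda>a. if a < m then inv_into {..<m} ((!) xs) (f a) else a)"
          have fin: "f a \<in> (!) xs ` {..<m}" if "a < m" for a
            using setis lenis that by (auto simp: set_conv_nth lessThan_def)
          have s_lt: "s a < m" if "a < m" for a
            unfolding s_def using inv_into_into[OF fin[OF that]] that by simp
          have s_eq: "xs ! (s a) = f a" if "a < m" for a
            unfolding s_def using f_inv_into_f[OF fin[OF that]] that by simp
          have sinj: "inj_on s {0..<m}"
          proof (rule inj_onI)
            fix a b assume "a \<in> {0..<m}" "b \<in> {0..<m}" "s a = s b"
            hence "f a = f b" using s_eq by (metis atLeastLessThan_iff)
            thus "a = b" using finj \<open>a \<in> {0..<m}\<close> \<open>b \<in> {0..<m}\<close> by (auto simp: inj_on_def)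
          qed
          have "s ` {0..<m} = {0..<m}"
            by (rule endo_inj_surj[OF _ _ sinj]) (use s_lt in auto)
          hence "s permutes {0..<m}"
            by (intro bij_imp_permutes) (simp add: bij_betw_def sinj, simp add: s_def)
          hence sP: "s \<in> P" unfolding P_def by simp
          have "f = h (xs, s)"
          proof
            fix a show "f a = h (xs, s) a"
              using s_eq PiE_arb[OF fPi[unfolded Pi_def]] unfolding h_def by auto
          qed
          thus "f \<in> h ` (L \<times> P)" using isL sP by blast
        qed
      qed
    qed
  qed
  also have "\<dots> = (\<Sum>xs\<in>L. \<Sum>s\<in>P. F (h (xs, s)))"
    by (simp add: sum.cartesian_product case_prod_beta')
  also have "\<dots> = (\<Sum>xs\<in>L. detn m (\<lambda>i a. A (xs!i) a) * detn m (\<lambda>i b. B (xs!i) b))"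
  proof (rule sum.cong[OF refl])
    fix xs assume "xs \<in> L"
    have "(\<Sum>s\<in>P. F (h (xs, s)))
        = (\<Sum>s\<in>P. (of_int (sign s) * (\<Prod>a<m. A (xs ! (s a)) a)) * detn m (\<lambda>i b. B (xs!i) b))"
    proof (rule sum.cong[OF refl])
      fix s assume "s \<in> P"
      hence p: "s permutes {0..<m}" unfolding P_def by simp
      have "(\<Prod>a<m. A (h (xs, s) a) a) = (\<Prod>a<m. A (xs ! (s a)) a)"
        unfolding h_def by simp
      moreover have "detn m (\<lambda>a b. B (h (xs, s) a) b) = detn m (\<lambda>a b. B (xs ! (s a)) b)"
        by (rule detn_cong) (simp add: h_def)
      moreover have "detn m (\<lambda>a b. B (xs ! (s a)) b) = of_int (sign s) * detn m (\<lambda>i b. B (xs!i) b)"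
        by (rule detn_permute_rows[OF p])
      ultimately show "F (h (xs, s)) = (of_int (sign s) * (\<Prod>a<m. A (xs ! (s a)) a)) * detn m (\<lambda>i b. B (xs!i) b)"
        unfolding F_def by simp
    qed
    also have "\<dots> = (\<Sum>s\<in>P. of_int (sign s) * (\<Prod>a<m. A (xs ! (s a)) a)) * detn m (\<lambda>i b. B (xs!i) b)"
      by (simp add: sum_distrib_right)
    also have "(\<Sum>s\<in>P. of_int (sign s) * (\<Prod>a<m. A (xs ! (s a)) a)) = detn m (\<lambda>a i. A (xs!i) a)"
      unfolding detn_def P_def by simp
    also have "\<dots> = detn m (\<lambda>i a. A (xs!i) a)"
      by (rule detn_transpose)
    finally show "(\<Sum>s\<in>P. F (h (xs, s))) = detn m (\<lambda>i a. A (xs!i) a) * detn m (\<lambda>i b. B (xs!i) b)" .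
  qed
  finally show ?thesis unfolding L_def .
qed

lemma interp_exists:
  fixes x v :: "nat \<Rightarrow> real"
  assumes "finite T" "inj_on x T"
  shows "\<exists>P. degree P \<le> card T - 1 \<and> (\<forall>j\<in>T. poly P (x j) = v j)"
  using assms
proof (induction T rule: finite_induct)
  case empty
  show ?case by (rule exI[of _ 0]) simp
next
  case (insert a T)
  from insert obtain P where P: "degree P \<le> card T - 1" "\<forall>j\<in>T. poly P (x j) = v j"
    by (auto simp: inj_on_insert)
  define Q where "Q = (\<Prod>j\<in>T. [:- x j, 1:])"
  have polyQ: "poly Q t = (\<Prod>j\<in>T. t - x j)" for t
    unfolding Q_def by (simp add: poly_prod)
  have degQ: "degree Q \<le> card T"
  proof -
    have "degree Q \<le> sum (degree \<circ> (\<lambda>j. [:- x j, 1:])) T"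
      unfolding Q_def by (rule degree_prod_sum_le[OF insert(1)])
    also have "\<dots> = card T" by simp
    finally show ?thesis .
  qed
  have Qa: "poly Q (x a) \<noteq> 0"
    unfolding polyQ using insert(1,2,4) by (auto simp: inj_on_def)
  define c where "c = (v a - poly P (x a)) / poly Q (x a)"
  define P' where "P' = P + Polynomial.smult c Q"
  have "degree P' \<le> card (insert a T) - 1"
  proof -
    have "degree P' \<le> max (degree P) (degree (Polynomial.smult c Q))"
      unfolding P'_def by (rule degree_add_le_max)
    also have "\<dots> \<le> card T" using P(1) degQ degree_smult_le[of c Q] by auto
    finally show ?thesis using insert(1,2) by simp
  qed
  moreover have "\<forall>j\<in>insert a T. poly P' (x j) = v j"
  proof
    fix j assume "j \<in> insert a T"
    show "poly P' (x j) = v j"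
    proof (cases "j = a")
      case True thus ?thesis using Qa unfolding P'_def c_def by simp
    next
      case False
      hence jT: "j \<in> T" using \<open>j \<in> insert a T\<close> by simp
      have "poly Q (x j) = 0" unfolding polyQ using insert(1) jT
        by (auto intro: prod_zero)
      thus ?thesis using P(2) jT unfolding P'_def by simp
    qed
  qed
  ultimately show ?case by blast
qed

lemma interp_unique:
  fixes x :: "nat \<Rightarrow> real"
  assumes "finite T" "inj_on x T" "degree P < card T" "\<forall>j\<in>T. poly P (x j) = 0"
  shows "P = 0"
proof (rule ccontr)
  assume P: "P \<noteq> 0"
  have "x ` T \<subseteq> {t. poly P t = 0}" using assms(4) by auto
  hence "card (x ` T) \<le> card {t. poly P t = 0}"
    by (rule card_mono[OF poly_roots_finite[OF P]])
  also have "\<dots> \<le> degree P" by (rule card_poly_roots_bound[OF P])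
  finally show False using assms(2,3) by (simp add: card_image)
qed

lemma poly_sum_upto:
  assumes "degree (P::real poly) \<le> r"
  shows "poly P t = (\<Sum>k\<le>r. coeff P k * t ^ k)"
proof -
  have "poly P t = (\<Sum>k\<le>degree P. coeff P k * t ^ k)" by (simp add: poly_altdef)
  also have "\<dots> = (\<Sum>k\<le>r. coeff P k * t ^ k)"
    by (rule sum.mono_neutral_left) (use assms in \<open>auto simp: coeff_eq_0\<close>)
  finally show ?thesis .
qed

lemma higher_pderiv_top:
  assumes "degree (P::real poly) \<le> r"
  shows "poly ((pderiv ^^ r) P) c = fact r * coeff P r"
proof -
  have "degree ((pderiv ^^ r) P) = 0" using assms by (simp add: degree_higher_pderiv)
  hence "(pderiv ^^ r) P = [:coeff ((pderiv ^^ r) P) 0:]" by (simp add: degree_0_id)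
  hence "poly ((pderiv ^^ r) P) c = coeff ((pderiv ^^ r) P) 0" by (metis poly_pCons mult_zero_right poly_0 add_0_right)
  also have "\<dots> = fact r * coeff P r"
    by (simp add: coeff_higher_pderiv pochhammer_fact)
  finally show ?thesis .
qed

lemma mono_pts:
  fixes y :: "nat \<Rightarrow> real"
  assumes "\<And>i. i < K \<Longrightarrow> y i < y (Suc i)" "i \<le> j" "j \<le> K"
  shows "y i \<le> y j"
  using assms(2,3)
proof (induction j)
  case 0 thus ?case by simp
next
  case (Suc j)
  show ?case
  proof (cases "i = Suc j")
    case True thus ?thesis by simp
  next
    case False
    hence "y i \<le> y j" using Suc by simp
    also have "y j < y (Suc j)" using assms(1) Suc by simp
    finally show ?thesis by simp
  qed
qed

lemma rolle_step:
  fixes D :: "nat \<Rightarrow> real \<Rightarrow> real" and Q :: "real poly"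
  assumes ab: "a < b" "0 \<le> a" "b \<le> 1"
    and der: "\<And>t. t \<in> {0..1} \<Longrightarrow> (D 0 has_real_derivative D 1 t) (at t within {0..1})"
    and za: "D 0 a = poly Q a" and zb: "D 0 b = poly Q b"
  shows "\<exists>z. a < z \<and> z < b \<and> D 1 z = poly (pderiv Q) z"
proof -
  define g where "g = (\<lambda>t. D 0 t - poly Q t)"
  have dg: "(g has_real_derivative (D 1 t - poly (pderiv Q) t)) (at t within {0..1})" if "t \<in> {0..1}" for t
    unfolding g_def
    by (rule DERIV_diff[OF der[OF that]]) (rule has_field_derivative_at_within[OF poly_DERIV])
  have "continuous_on {0..1} g"
    unfolding continuous_on_eq_continuous_within using dg DERIV_continuous by blast
  hence cg: "continuous_on {a..b} g" by (rule continuous_on_subset) (use ab in auto)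
  have dg': "(g has_derivative (*) (D 1 t - poly (pderiv Q) t)) (at t)" if "a < t" "t < b" for t
  proof -
    have "at t within {0..1} = at t" by (rule at_within_Icc_at) (use that ab in auto)
    thus ?thesis using dg[of t] that ab by (simp add: has_field_derivative_def)
  qed
  obtain z where z: "a < z" "z < b" "(*) (D 1 z - poly (pderiv Q) z) = (\<lambda>v. 0)"
    using Rolle_deriv[OF ab(1) _ cg dg'] za zb unfolding g_def by auto
  have "D 1 z - poly (pderiv Q) z = 0" using fun_cong[OF z(3), of 1] by simp
  thus ?thesis using z by auto
qed

lemma gen_rolle:
  fixes D :: "nat \<Rightarrow> real \<Rightarrow> real" and y :: "nat \<Rightarrow> real" and Q :: "real poly"
  assumes y: "\<And>i. i < Suc k \<Longrightarrow> y i < y (Suc i)" and y0: "0 \<le> y 0" and y1: "y (Suc k) \<le> 1"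
    and der: "\<And>j t. j \<le> k \<Longrightarrow> t \<in> {0..1} \<Longrightarrow> (D j has_real_derivative D (Suc j) t) (at t within {0..1})"
    and zero: "\<And>i. i \<le> Suc k \<Longrightarrow> D 0 (y i) = poly Q (y i)"
  shows "\<exists>c. y 0 < c \<and> c < y (Suc k) \<and> D (Suc k) c = poly ((pderiv ^^ Suc k) Q) c"
  using assms
proof (induction k arbitrary: y D Q)
  case 0
  obtain z where "y 0 < z" "z < y 1" "D 1 z = poly (pderiv Q) z"
    using rolle_step[of "y 0" "y 1" D Q] 0 by auto
  thus ?case by auto
next
  case (Suc k)
  have step: "\<exists>z. y i < z \<and> z < y (Suc i) \<and> D 1 z = poly (pderiv Q) z" if "i \<le> Suc k" for i
  proof (rule rolle_step)
    show "y i < y (Suc i)" using Suc.prems(1) that by simp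
    show "0 \<le> y i" using Suc.prems(2) mono_pts[of "Suc (Suc k)" y 0 i] Suc.prems(1) that by simp
    show "y (Suc i) \<le> 1" using Suc.prems(3) mono_pts[of "Suc (Suc k)" y "Suc i" "Suc (Suc k)"] Suc.prems(1) that by simp
    show "\<And>t. t \<in> {0..1} \<Longrightarrow> (D 0 has_real_derivative D 1 t) (at t within {0..1})"
      using Suc.prems(4)[of 0] by simp
    show "D 0 (y i) = poly Q (y i)" "D 0 (y (Suc i)) = poly Q (y (Suc i))"
      using Suc.prems(5) that by auto
  qed
  have "\<forall>i. \<exists>z. i \<le> Suc k \<longrightarrow> y i < z \<and> z < y (Suc i) \<and> D 1 z = poly (pderiv Q) z"
    using step by blast
  then obtain z where z: "\<And>i. i \<le> Suc k \<Longrightarrow> y i < z i \<and> z i < y (Suc i) \<and> D 1 (z i) = poly (pderiv Q) (z i)"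
    by metis
  have "\<exists>c. z 0 < c \<and> c < z (Suc k) \<and> D (Suc (Suc k)) c = poly ((pderiv ^^ Suc k) (pderiv Q)) c"
  proof (rule Suc.IH[of z "\<lambda>j. D (Suc j)" "pderiv Q"])
    show "z i < z (Suc i)" if "i < Suc k" for i
      using z[of i] z[of "Suc i"] that by force
    show "0 \<le> z 0" using z[of 0] Suc.prems(2) by force
    show "z (Suc k) \<le> 1" using z[of "Suc k"] Suc.prems(3)
      mono_pts[of "Suc (Suc k)" y "Suc (Suc k)" "Suc (Suc k)"] by force
    show "(D (Suc j) has_real_derivative D (Suc (Suc j)) t) (at t within {0..1})"
      if "j \<le> k" "t \<in> {0..1}" for j t
      using Suc.prems(4)[of "Suc j" t] that by simp
    show "D (Suc 0) (z i) = poly (pderiv Q) (z i)" if "i \<le> Suc k" for i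
      using z[OF that] by simp
  qed
  then obtain c where c: "z 0 < c" "c < z (Suc k)" "D (Suc (Suc k)) c = poly ((pderiv ^^ Suc k) (pderiv Q)) c"
    by blast
  have "(pderiv ^^ Suc k) (pderiv Q) = (pderiv ^^ Suc (Suc k)) Q"
    by (simp only: funpow_Suc_right o_apply)
  moreover have "y 0 < c" using z[of 0] c by force
  moreover have "c < y (Suc (Suc k))" using z[of "Suc k"] c by force
  ultimately show ?case using c by auto
qed

lemma phi_alt: "phi x r xs v = detn (Suc r) (\<lambda>i k. if k = r then v (xs!i) else x (xs!i) ^ k)"
  unfolding phi_def by (rule detn_cong) auto

lemma phi_lin: "phi x r xs (\<lambda>i. a * u i + w i) = a * phi x r xs u + phi x r xs w"
  unfolding phi_alt using detn_linear_col[of r "Suc r" a "\<lambda>i. u (xs!i)" "\<lambda>i. w (xs!i)" "\<lambda>i k. x (xs!i) ^ k"]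
  by simp

lemma phi_zero: "phi x r xs (\<lambda>i. 0) = 0"
  using phi_lin[of x r xs 1 "\<lambda>i. 0" "\<lambda>i. 0"] by simp

lemma phi_scale: "phi x r xs (\<lambda>i. a * u i) = a * phi x r xs u"
  using phi_lin[of x r xs a u "\<lambda>i. 0"] phi_zero by simp

lemma phi_add: "phi x r xs (\<lambda>i. u i + w i) = phi x r xs u + phi x r xs w"
  using phi_lin[of x r xs 1 u w] by simp

lemma phi_sum: "finite K \<Longrightarrow> phi x r xs (\<lambda>i. \<Sum>k\<in>K. g k i) = (\<Sum>k\<in>K. phi x r xs (g k))"
proof (induction K rule: finite_induct)
  case empty thus ?case using phi_zero by simp
next
  case (insert a K)
  thus ?case using phi_add[of x r xs "g a" "\<lambda>i. \<Sum>k\<in>K. g k i"] by simp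
qed

lemma phi_local:
  assumes "length xs = Suc r" "\<And>j. j \<in> set xs \<Longrightarrow> u j = w j"
  shows "phi x r xs u = phi x r xs w"
  unfolding phi_def by (rule detn_cong) (use assms in auto)

lemma phi_pow_low: "k < r \<Longrightarrow> phi x r xs (vpow x k) = 0"
  unfolding phi_def by (rule detn_cols_eq[of k "Suc r" r]) (auto simp: vpow_def)

lemma phi_pow_top: "phi x r xs (vpow x r) = detn (Suc r) (\<lambda>i k. x (xs!i) ^ k)"
  unfolding phi_def by (rule detn_cong) (auto simp: vpow_def less_Suc_eq)

lemma phi_rep:
  assumes "length xs = Suc r" "degree P \<le> r" "\<And>j. j \<in> set xs \<Longrightarrow> poly P (x j) = v j"
  shows "phi x r xs v = coeff P r * phi x r xs (vpow x r)"
proof -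
  have "phi x r xs v = phi x r xs (\<lambda>i. \<Sum>k\<le>r. coeff P k * vpow x k i)"
    by (rule phi_local) (use assms in \<open>auto simp: poly_sum_upto vpow_def\<close>)
  also have "\<dots> = (\<Sum>k\<le>r. coeff P k * phi x r xs (vpow x k))"
    by (subst phi_sum) (auto simp: phi_scale)
  also have "\<dots> = coeff P r * phi x r xs (vpow x r) + (\<Sum>k<r. coeff P k * phi x r xs (vpow x k))"
    by (simp add: lessThan_Suc_atMost[symmetric])
  also have "(\<Sum>k<r. coeff P k * phi x r xs (vpow x k)) = 0"
    by (rule sum.neutral) (simp add: phi_pow_low)
  finally show ?thesis by simp
qed

definition sl :: "nat set \<Rightarrow> nat list" where "sl T = sorted_list_of_set T"

context
  fixes n r :: nat and x :: "nat \<Rightarrow> real"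
  assumes xinc: "\<And>i j. 1 \<le> i \<Longrightarrow> i < j \<Longrightarrow> j \<le> n \<Longrightarrow> x i < x j"
begin

lemma x_inj: "inj_on x {1..n}"
proof (rule inj_onI)
  fix i j assume "i \<in> {1..n}" "j \<in> {1..n}" "x i = x j"
  thus "i = j" using xinc[of i j] xinc[of j i] by (cases i j rule: linorder_cases) auto
qed

lemma x_inj_sub: "T \<subseteq> {1..n} \<Longrightarrow> inj_on x T"
  using x_inj inj_on_subset by blast

lemma Ir_props:
  assumes "xs \<in> Ir n r"
  shows "length xs = Suc r" "sorted_wrt (<) xs" "set xs \<subseteq> {1..n}"
  using assms unfolding Ir_def by auto

lemma V_pos:
  assumes "xs \<in> Ir n r"
  shows "0 < phi x r xs (vpow x r)"
  unfolding phi_pow_top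
proof (rule vdm_pos)
  fix i j assume ij: "i < j" "j < Suc r"
  have l: "length xs = Suc r" "sorted_wrt (<) xs" "set xs \<subseteq> {1..n}" using Ir_props[OF assms] by auto
  have "xs ! i < xs ! j" using sorted_wrt_nth_less[OF l(2) ij(1)] ij l(1) by simp
  moreover have "xs ! i \<in> set xs" "xs ! j \<in> set xs" using l(1) ij by auto
  hence "xs ! i \<in> {1..n}" "xs ! j \<in> {1..n}" using l(3) by auto
  ultimately show "x (xs ! i) < x (xs ! j)" using xinc by auto
qed

lemma sl_Ir:
  assumes "T \<subseteq> {1..n}" "card T = Suc r"
  shows "sl T \<in> Ir n r" "set (sl T) = T"
proof -
  have fin: "finite T" using assms(1) finite_subset by blast
  show "set (sl T) = T" unfolding sl_def using fin by simp
  thus "sl T \<in> Ir n r" unfolding Ir_def sl_def using fin assms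
    by (auto simp: strict_sorted_iff)
qed

lemma Ir_sl: "xs \<in> Ir n r \<Longrightarrow> sl (set xs) = xs"
  unfolding sl_def Ir_def
  by (auto simp: strict_sorted_iff sorted_list_of_set.idem_if_sorted_distinct)

lemma Ir_card: "xs \<in> Ir n r \<Longrightarrow> card (set xs) = Suc r"
  unfolding Ir_def by (auto simp: strict_sorted_iff distinct_card)

definition cc :: "nat set \<Rightarrow> (nat \<Rightarrow> real) \<Rightarrow> real" where
  "cc T v = phi x r (sl T) v / phi x r (sl T) (vpow x r)"

lemma cc_coeff:
  assumes "T \<subseteq> {1..n}" "card T = Suc r" "degree P \<le> r" "\<And>j. j \<in> T \<Longrightarrow> poly P (x j) = v j"
  shows "cc T v = coeff P r"
proof -
  have I: "sl T \<in> Ir n r" "set (sl T) = T" using sl_Ir[OF assms(1,2)] by auto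
  have "phi x r (sl T) v = coeff P r * phi x r (sl T) (vpow x r)"
    by (rule phi_rep) (use Ir_props[OF I(1)] assms I in auto)
  thus ?thesis unfolding cc_def using V_pos[OF I(1)] by simp
qed

lemma three_term:
  assumes Y: "Y \<subseteq> {1..n}" "card Y = Suc (Suc r)"
    and ab: "a \<in> Y" "b \<in> Y" "a \<noteq> b" and ab': "a' \<in> Y" "b' \<in> Y" "a' \<noteq> b'"
  shows "(cc (Y - {a}) v - cc (Y - {b}) v) / (x b - x a)
       = (cc (Y - {a'}) v - cc (Y - {b'}) v) / (x b' - x a')"
proof -
  have finY: "finite Y" using Y(1) finite_subset by blast
  have injY: "inj_on x Y" using x_inj_sub[OF Y(1)] .
  have cardm: "card (Y - {c}) = Suc r" if "c \<in> Y" for c using Y(2) finY that by simp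
  have "\<forall>c. \<exists>P. c \<in> Y \<longrightarrow> degree P \<le> r \<and> (\<forall>j\<in>Y - {c}. poly P (x j) = v j)"
  proof
    fix c show "\<exists>P. c \<in> Y \<longrightarrow> degree P \<le> r \<and> (\<forall>j\<in>Y - {c}. poly P (x j) = v j)"
    proof (cases "c \<in> Y")
      case True
      obtain P where "degree P \<le> card (Y - {c}) - 1" "\<forall>j\<in>Y - {c}. poly P (x j) = v j"
        using interp_exists[of "Y - {c}" x v] finY injY inj_on_subset[of x Y "Y - {c}"] by auto
      thus ?thesis using cardm[OF True] by auto
    qed simp
  qed
  then obtain P where P: "\<And>c. c \<in> Y \<Longrightarrow> degree (P c) \<le> r \<and> (\<forall>j\<in>Y - {c}. poly (P c) (x j) = v j)"
    by metis
  have ccP: "cc (Y - {c}) v = coeff (P c) r" if "c \<in> Y" for c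
    by (rule cc_coeff) (use Y(1) cardm[OF that] P[OF that] in auto)
  define W where "W = (\<lambda>a b. Polynomial.smult (1 / (x b - x a)) ([:- x a, 1:] * P a - [:- x b, 1:] * P b))"
  have Wprops: "degree (W a b) \<le> Suc r \<and> (\<forall>j\<in>Y. poly (W a b) (x j) = v j)
      \<and> coeff (W a b) (Suc r) = (coeff (P a) r - coeff (P b) r) / (x b - x a)"
    if ab: "a \<in> Y" "b \<in> Y" "a \<noteq> b" for a b
  proof (intro conjI)
    have xab: "x b - x a \<noteq> 0" using injY ab by (auto simp: inj_on_def)
    have dA: "degree ([:- x a, 1:] * P a) \<le> Suc r"
      using degree_mult_le[of "[:- x a, 1:]" "P a"] P[OF ab(1)] by simp
    have dB: "degree ([:- x b, 1:] * P b) \<le> Suc r"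
      using degree_mult_le[of "[:- x b, 1:]" "P b"] P[OF ab(2)] by simp
    show "degree (W a b) \<le> Suc r"
      unfolding W_def using degree_smult_le degree_diff_le[OF dA dB] order_trans by blast
    show "\<forall>j\<in>Y. poly (W a b) (x j) = v j"
    proof
      fix j assume j: "j \<in> Y"
      have "poly (W a b) (x j) = ((x j - x a) * poly (P a) (x j) - (x j - x b) * poly (P b) (x j)) / (x b - x a)"
        using xab unfolding W_def by (simp add: poly_mult field_simps)
      also have "\<dots> = v j"
      proof (cases "j = a")
        case True
        hence "poly (P b) (x j) = v j" using P[OF ab(2)] j ab(3) by auto
        thus ?thesis using True xab by (simp add: field_simps)
      next
        case False
        note ja = False
        show ?thesis
        proof (cases "j = b")
          case True
          hence "poly (P a) (x j) = v j" using P[OF ab(1)] j ab(3) by auto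
          thus ?thesis using True xab by (simp add: field_simps)
        next
          case False
          hence "poly (P a) (x j) = v j" "poly (P b) (x j) = v j" using P[OF ab(1)] P[OF ab(2)] j ja by auto
          thus ?thesis using xab by (simp add: field_simps)
        qed
      qed
      finally show "poly (W a b) (x j) = v j" .
    qed
    have c1: "coeff ([:- c, 1:] * Q) (Suc r) = coeff Q r" if "degree Q \<le> r" for c and Q :: "real poly"
    proof -
      have "coeff Q (Suc r) = 0" using that by (simp add: coeff_eq_0)
      thus ?thesis by (simp add: mult_pCons_left coeff_pCons)
    qed
    show "coeff (W a b) (Suc r) = (coeff (P a) r - coeff (P b) r) / (x b - x a)"
    proof -
      have e1: "coeff ([:- x a, 1:] * P a) (Suc r) = coeff (P a) r" by (rule c1) (use P[OF ab(1)] in simp)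
      have e2: "coeff ([:- x b, 1:] * P b) (Suc r) = coeff (P b) r" by (rule c1) (use P[OF ab(2)] in simp)
      show ?thesis unfolding W_def coeff_smult coeff_diff e1 e2 using xab by (simp add: field_simps)
    qed
  qed
  have "W a b = W a' b'"
  proof -
    have "W a b - W a' b' = 0"
    proof (rule interp_unique[OF finY injY])
      show "degree (W a b - W a' b') < card Y"
        using degree_diff_le[of "W a b" "Suc r" "W a' b'"] Wprops[OF ab] Wprops[OF ab'] Y(2) by simp
      show "\<forall>j\<in>Y. poly (W a b - W a' b') (x j) = 0"
        using Wprops[OF ab] Wprops[OF ab'] by simp
    qed
    thus ?thesis by simp
  qed
  hence "coeff (W a b) (Suc r) = coeff (W a' b') (Suc r)" by simp
  thus ?thesis using Wprops[OF ab] Wprops[OF ab'] ccP ab ab' by simp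
qed

end

context
  fixes n r :: nat and x :: "nat \<Rightarrow> real"
  assumes xinc: "\<And>i j. 1 \<le> i \<Longrightarrow> i < j \<Longrightarrow> j \<le> n \<Longrightarrow> x i < x j"
begin

lemma V_pos_sl:
  assumes "T \<subseteq> {1..n}" "card T = Suc r"
  shows "0 < phi x r (sl T) (vpow x r)"
  by (rule V_pos[OF xinc sl_Ir(1)[OF xinc assms]])

lemma cons_all:
  assumes cons: "\<And>i. i \<in> {1..n-r} \<Longrightarrow> phi_cons x r i w \<ge> 0"
  shows "T \<subseteq> {1..n} \<Longrightarrow> card T = Suc r \<Longrightarrow> 0 \<le> cc r x T w"
proof (induction "Max T - Min T" arbitrary: T rule: less_induct)
  case less
  have fin: "finite T" using less.prems(1) finite_subset by blast
  have ne: "T \<noteq> {}" using less.prems(2) by auto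
  define lo where "lo = Min T"
  define hi where "hi = Max T"
  have loT: "lo \<in> T" and hiT: "hi \<in> T" unfolding lo_def hi_def using fin ne by auto
  have Tsub: "T \<subseteq> {lo..hi}" unfolding lo_def hi_def using Min_le[OF fin] Max_ge[OF fin] by auto
  have lo1: "1 \<le> lo" and hin: "hi \<le> n" using loT hiT less.prems(1) by auto
  have ccdef: "cc r x S w = phi x r (sl S) w / phi x r (sl S) (vpow x r)" for S
    by (rule cc_def[OF xinc])
  show ?case
  proof (cases "T = {lo..hi}")
    case True
    have "card {lo..hi} = Suc r" using True less.prems(2) by simp
    hence hir: "hi = lo + r" using loT hiT Tsub by auto
    have "sl T = [lo..<lo + Suc r]"
      unfolding sl_def True hir by (simp add: atLeastLessThanSuc_atLeastAtMost[symmetric])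
    moreover have "lo \<in> {1..n-r}" using lo1 hin hir by auto
    ultimately have "0 \<le> phi x r (sl T) w" using cons[of lo] unfolding phi_cons_def by simp
    thus ?thesis unfolding ccdef using V_pos_sl[OF less.prems] by simp
  next
    case False
    then obtain t where t: "t \<in> {lo..hi}" "t \<notin> T" using Tsub by blast
    have tlo: "lo < t" and thi: "t < hi" using t loT hiT by (auto simp: order_le_less)
    define Y where "Y = insert t T"
    have Ysub: "Y \<subseteq> {1..n}" unfolding Y_def using less.prems(1) t lo1 hin by auto
    have cardY: "card Y = Suc (Suc r)" unfolding Y_def using fin t(2) less.prems(2) by simp
    have finY: "finite Y" unfolding Y_def using fin by simp
    have YT: "Y - {t} = T" unfolding Y_def using t(2) by auto
    have Ylohi: "Y \<subseteq> {lo..hi}" unfolding Y_def using Tsub t(1) by auto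
    have loY: "lo \<in> Y" and hiY: "hi \<in> Y" and tY: "t \<in> Y" unfolding Y_def using loT hiT by auto
    have lohi: "lo \<noteq> hi" using tlo thi by simp
    define T0 where "T0 = Y - {lo}"
    define T1 where "T1 = Y - {hi}"
    have T0sub: "T0 \<subseteq> {1..n}" and T1sub: "T1 \<subseteq> {1..n}" unfolding T0_def T1_def using Ysub by auto
    have cT0: "card T0 = Suc r" and cT1: "card T1 = Suc r"
      unfolding T0_def T1_def using cardY finY loY hiY by auto
    have finT0: "finite T0" and finT1: "finite T1" unfolding T0_def T1_def using finY by auto
    have neT0: "T0 \<noteq> {}" and neT1: "T1 \<noteq> {}" using cT0 cT1 by auto
    have m0: "Max T0 - Min T0 < Max T - Min T"
    proof -
      have "Max T0 \<in> T0" "Min T0 \<in> T0" using finT0 neT0 by auto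
      hence "Max T0 \<le> hi" "lo < Min T0" "Min T0 \<le> hi" using Ylohi unfolding T0_def by auto
      thus ?thesis unfolding lo_def[symmetric] hi_def[symmetric] by linarith
    qed
    have m1: "Max T1 - Min T1 < Max T - Min T"
    proof -
      have "Max T1 \<in> T1" "Min T1 \<in> T1" using finT1 neT1 by auto
      hence "Max T1 < hi" "lo \<le> Min T1" "lo \<le> Max T1" using Ylohi unfolding T1_def by auto
      thus ?thesis unfolding lo_def[symmetric] hi_def[symmetric] by linarith
    qed
    have c0: "0 \<le> cc r x T0 w" by (rule less.hyps[OF m0 T0sub cT0])
    have c1: "0 \<le> cc r x T1 w" by (rule less.hyps[OF m1 T1sub cT1])
    have tt: "(cc r x T0 w - cc r x T w) / (x t - x lo) = (cc r x T w - cc r x T1 w) / (x hi - x t)"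
    proof -
      have "lo \<noteq> t" "t \<noteq> hi" using tlo thi by auto
      from three_term[OF xinc Ysub cardY loY tY this(1) tY hiY this(2), where v=w]
      show ?thesis using YT unfolding T0_def T1_def by simp
    qed
    have xlt: "x lo < x t" "x t < x hi" using xinc[of lo t] xinc[of t hi] tlo thi lo1 hin by auto
    define K where "K = (cc r x T w - cc r x T1 w) / (x hi - x t)"
    have e1: "cc r x T w = cc r x T1 w + K * (x hi - x t)" unfolding K_def using xlt by simp
    have e2: "cc r x T w = cc r x T0 w - K * (x t - x lo)"
    proof -
      have "(cc r x T0 w - cc r x T w) / (x t - x lo) = K" using tt unfolding K_def .
      thus ?thesis using xlt by (simp add: field_simps)
    qed
    show ?thesis
    proof (cases "0 \<le> K")
      case True thus ?thesis using e1 c1 xlt by simp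
    next
      case False
      hence "K * (x t - x lo) \<le> 0" using xlt by (simp add: mult_nonpos_nonneg)
      thus ?thesis using e2 c0 by simp
    qed
  qed
qed

lemma upt_Ir: "i \<in> {1..n-r} \<Longrightarrow> [i..<i + Suc r] \<in> Ir n r"
  unfolding Ir_def by (auto simp del: upt_Suc simp add: sorted_wrt_upt)

lemma partA: "Ctilde n x r R = Ccons n x r R"
proof
  show "Ctilde n x r R \<subseteq> Ccons n x r R"
    unfolding Ctilde_def Ccons_def phi_cons_def using upt_Ir by blast
next
  show "Ccons n x r R \<subseteq> Ctilde n x r R"
  proof
    fix f assume f: "f \<in> Ccons n x r R"
    have cons: "\<And>i. i \<in> {1..n-r} \<Longrightarrow> phi_cons x r i (star R x f) \<ge> 0"
      using f unfolding Ccons_def by auto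
    have "0 \<le> phi x r xs (star R x f)" if xs: "xs \<in> Ir n r" for xs
    proof -
      have T: "set xs \<subseteq> {1..n}" "card (set xs) = Suc r" using Ir_props[OF xinc xs] Ir_card[OF xinc xs] by auto
      have "0 \<le> cc r x (set xs) (star R x f)" by (rule cons_all[OF cons T])
      hence "0 \<le> phi x r (sl (set xs)) (star R x f) / phi x r (sl (set xs)) (vpow x r)"
        using cc_def[OF xinc] by simp
      moreover have "0 < phi x r (sl (set xs)) (vpow x r)" by (rule V_pos_sl[OF T])
      ultimately have "0 \<le> phi x r (sl (set xs)) (star R x f)"
        by (simp add: zero_le_divide_iff)
      thus ?thesis using Ir_sl[OF xinc xs] by simp
    qed
    thus "f \<in> Ctilde n x r R" using f unfolding Ctilde_def Ccons_def by auto
  qed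
qed

end

context
  fixes n r :: nat and x :: "nat \<Rightarrow> real"
  assumes xinc: "\<And>i j. 1 \<le> i \<Longrightarrow> i < j \<Longrightarrow> j \<le> n \<Longrightarrow> x i < x j"
    and x0: "0 \<le> x 1" and x1: "x n \<le> 1"
begin

lemma x_range: assumes "i \<in> {1..n}" shows "0 \<le> x i" "x i \<le> 1"
proof -
  have "x 1 \<le> x i" using xinc[of 1 i] assms by (cases "i = 1") auto
  thus "0 \<le> x i" using x0 by simp
  have "x i \<le> x n" using xinc[of i n] assms by (cases "i = n") auto
  thus "x i \<le> 1" using x1 by simp
qed

lemma partB:
  assumes r1: "1 \<le> r"
    and der: "\<forall>k<r. \<forall>t\<in>{0..1}. (D k has_real_derivative D (Suc k) t) (at t within {0..1})"
    and D0: "D 0 = (\<lambda>t. R t * F t)"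
    and fdef: "f = (\<lambda>i. if i \<in> {1..n} then F (x i) else 0)"
    and xs: "xs \<in> Ir n r"
  shows "\<exists>c. x (xs ! 0) < c \<and> c < x (xs ! r) \<and>
           phi x r xs (star R x f) = D r c / fact r * phi x r xs (vpow x r)"
proof -
  have l: "length xs = Suc r" "sorted_wrt (<) xs" "set xs \<subseteq> {1..n}" using Ir_props[OF xinc xs] by auto
  have cT: "card (set xs) = Suc r" using Ir_card[OF xinc xs] .
  have inj: "inj_on x (set xs)" using x_inj_sub[OF xinc l(3)] .
  obtain P where P: "degree P \<le> card (set xs) - 1" "\<forall>j\<in>set xs. poly P (x j) = D 0 (x j)"
    using interp_exists[of "set xs" x "\<lambda>j. D 0 (x j)"] inj by auto
  have degP: "degree P \<le> r" using P(1) cT by simp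
  have "phi x r xs (star R x f) = coeff P r * phi x r xs (vpow x r)"
  proof (rule phi_rep[OF l(1) degP])
    fix j assume j: "j \<in> set xs"
    hence "j \<in> {1..n}" using l(3) by auto
    thus "poly P (x j) = star R x f j" using P(2) j unfolding star_def fdef D0 by simp
  qed
  moreover have "\<exists>c. x (xs!0) < c \<and> c < x (xs ! Suc (r - 1)) \<and>
      D (Suc (r - 1)) c = poly ((pderiv ^^ Suc (r - 1)) P) c"
  proof (rule gen_rolle[where y = "\<lambda>i. x (xs ! i)"])
    have mem: "xs ! i \<in> {1..n}" if "i \<le> r" for i
    proof -
      have "xs ! i \<in> set xs" using l(1) that by simp
      thus ?thesis using l(3) by blast
    qed
    show "x (xs ! i) < x (xs ! Suc i)" if "i < Suc (r - 1)" for i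
    proof -
      have "xs ! i < xs ! Suc i" using sorted_wrt_nth_less[OF l(2), of i "Suc i"] l(1) that r1 by simp
      thus ?thesis using xinc mem[of i] mem[of "Suc i"] that r1 by auto
    qed
    show "0 \<le> x (xs ! 0)" using x_range mem[of 0] by auto
    show "x (xs ! Suc (r - 1)) \<le> 1" using x_range mem[of r] r1 by auto
    show "(D j has_real_derivative D (Suc j) t) (at t within {0..1})" if "j \<le> r - 1" "t \<in> {0..1}" for j t
      using der that r1 by auto
    show "D 0 (x (xs ! i)) = poly P (x (xs ! i))" if "i \<le> Suc (r - 1)" for i
      using P(2) l(1) that r1 by auto
  qed
  then obtain c where c: "x (xs!0) < c" "c < x (xs ! r)" "D r c = poly ((pderiv ^^ r) P) c"
    using r1 by auto
  have "D r c = fact r * coeff P r" using c(3) higher_pderiv_top[OF degP] by simp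
  ultimately show ?thesis using c(1,2) by (intro exI[of _ c]) auto
qed

end

context
  fixes n r :: nat and x :: "nat \<Rightarrow> real"
  assumes xinc: "\<And>i j. 1 \<le> i \<Longrightarrow> i < j \<Longrightarrow> j \<le> n \<Longrightarrow> x i < x j"
begin

lemma inner_supp:
  assumes "J \<subseteq> {1..n}" "\<And>i. i \<notin> J \<Longrightarrow> a i = 0"
  shows "inner_n n a b = (\<Sum>j\<in>J. a j * b j)"
  unfolding inner_n_def by (rule sum.mono_neutral_right) (use assms in auto)

lemma gram_pos:
  assumes J: "J \<subseteq> {1..n}" "Suc r \<le> card J"
  shows "0 < detn r (\<lambda>a b. \<Sum>j\<in>J. x j ^ a * x j ^ b)"
proof -
  have finJ: "finite J" using J(1) finite_subset by blast
  define L where "L = {xs. length xs = r \<and> sorted_wrt (<) xs \<and> set xs \<subseteq> J}"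
  have cb: "detn r (\<lambda>a b. \<Sum>j\<in>J. x j ^ a * x j ^ b)
      = (\<Sum>xs\<in>L. detn r (\<lambda>i a. x (xs!i) ^ a) * detn r (\<lambda>i b. x (xs!i) ^ b))"
    unfolding L_def by (rule cauchy_binet[OF finJ])
  define xs0 where "xs0 = take r (sorted_list_of_set J)"
  have len0: "length xs0 = r" unfolding xs0_def using J(2) by simp
  have s0: "sorted_wrt (<) xs0" unfolding xs0_def by (rule sorted_wrt_take) (simp add: strict_sorted_iff)
  have set0: "set xs0 \<subseteq> J" unfolding xs0_def using set_take_subset[of r "sorted_list_of_set J"] finJ by auto
  have xs0L: "xs0 \<in> L" unfolding L_def using len0 s0 set0 by simp
  have pos: "0 < detn r (\<lambda>i a. x (xs0!i) ^ a)"
  proof (rule vdm_pos)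
    fix i j assume ij: "i < j" "j < r"
    have "xs0 ! i < xs0 ! j" using sorted_wrt_nth_less[OF s0 ij(1)] ij len0 by simp
    moreover have "xs0 ! i \<in> set xs0" "xs0 ! j \<in> set xs0" using ij len0 by auto
    hence "xs0 ! i \<in> {1..n}" "xs0 ! j \<in> {1..n}" using set0 J(1) by auto
    ultimately show "x (xs0 ! i) < x (xs0 ! j)" using xinc by auto
  qed
  have finL: "finite L"
    by (rule finite_subset[OF _ finite_lists_length_eq[OF finJ, of r]]) (auto simp: L_def)
  have "detn r (\<lambda>i a. x (xs0!i) ^ a) * detn r (\<lambda>i b. x (xs0!i) ^ b)
      \<le> (\<Sum>xs\<in>L. detn r (\<lambda>i a. x (xs!i) ^ a) * detn r (\<lambda>i b. x (xs!i) ^ b))"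
    by (rule member_le_sum[OF xs0L _ finL]) simp
  moreover have "0 < detn r (\<lambda>i a. x (xs0!i) ^ a) * detn r (\<lambda>i b. x (xs0!i) ^ b)"
    using pos by simp
  ultimately show ?thesis using cb by simp
qed

lemma partC:
  assumes J: "J \<subseteq> {1..n}" "Suc r \<le> card J"
  shows "- inner_n n f (tJ n x r R J)
    = (1 / NJ n x r R J) *
      (\<Sum>xs \<in> {xs \<in> Ir n r. set xs \<subseteq> J}. phi x r xs (star R x f) * phi x r xs (vpow x r))"
proof -
  have finJ: "finite J" using J(1) finite_subset by blast
  define Gm where "Gm = (\<lambda>a b. \<Sum>j\<in>J. x j ^ a * x j ^ b)"
  define bv where "bv = (\<lambda>a. \<Sum>j\<in>J. x j ^ r * x j ^ a)"
  have G0: "detn r Gm \<noteq> 0" using gram_pos[OF J] unfolding Gm_def by simp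
  define GM where "GM = M r Gm"
  have GMc: "GM \<in> carrier_mat r r" unfolding GM_def by simp
  have "GM \<in> Units (ring_mat TYPE(real) r undefined)"
    by (rule det_non_zero_imp_unit[OF GMc]) (use G0 in \<open>simp add: GM_def detn_det\<close>)
  then obtain B where B: "B \<in> carrier_mat r r" "GM * B = 1\<^sub>m r"
    unfolding Units_def ring_mat_def by auto
  define \<alpha> where "\<alpha> = B *\<^sub>v vec r bv"
  have GMa: "GM *\<^sub>v \<alpha> = vec r bv"
  proof -
    have "GM *\<^sub>v \<alpha> = (GM * B) *\<^sub>v vec r bv"
      unfolding \<alpha>_def by (rule assoc_mult_mat_vec[symmetric, OF GMc B(1)]) simp
    thus ?thesis using B(2) by simp
  qed
  define al where "al = (\<lambda>k. \<alpha> $ k)"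
  have dima: "dim_vec \<alpha> = r" unfolding \<alpha>_def using B(1) by simp
  have eqs: "(\<Sum>c<r. Gm a c * al c) = bv a" if a: "a < r" for a
  proof -
    have "(GM *\<^sub>v \<alpha>) $ a = bv a" using GMa a by simp
    moreover have "(GM *\<^sub>v \<alpha>) $ a = (\<Sum>c\<in>{0..<r}. Gm a c * al c)"
      using a dima unfolding al_def GM_def by (simp add: scalar_prod_def)
    ultimately show ?thesis by (simp add: atLeast0LessThan)
  qed
  define u where "u = restr J (vpow x r)"
  define X where "X = XJ x r J"
  define p where "p = (\<lambda>i. \<Sum>k<r. al k * restr J (vpow x k) i)"
  have pX: "p \<in> X" unfolding X_def XJ_def p_def by auto
  have Xsupp: "v i = 0" if "v \<in> X" "i \<notin> J" for v i
    using that unfolding X_def XJ_def restr_def by auto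
  define d where "d = (\<lambda>i. u i - p i)"
  have dsupp: "d i = 0" if "i \<notin> J" for i
    using that Xsupp[OF pX that] unfolding d_def u_def restr_def by simp
  have dJ: "d j = x j ^ r - (\<Sum>c<r. al c * x j ^ c)" if "j \<in> J" for j
    using that unfolding d_def u_def p_def restr_def vpow_def by simp
  have dk: "(\<Sum>j\<in>J. d j * x j ^ k) = 0" if k: "k < r" for k
  proof -
    have "(\<Sum>j\<in>J. d j * x j ^ k) = (\<Sum>j\<in>J. x j ^ r * x j ^ k - (\<Sum>c<r. al c * (x j ^ k * x j ^ c)))"
    proof (rule sum.cong[OF refl])
      fix j assume "j \<in> J"
      hence "d j = x j ^ r - (\<Sum>c<r. al c * x j ^ c)" by (rule dJ)
      thus "d j * x j ^ k = x j ^ r * x j ^ k - (\<Sum>c<r. al c * (x j ^ k * x j ^ c))"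
        by (simp add: right_diff_distrib sum_distrib_left mult_ac)
    qed
    also have "\<dots> = bv k - (\<Sum>c<r. al c * Gm k c)"
      unfolding bv_def Gm_def by (simp add: sum_subtractf sum_distrib_left sum.swap[of _ J])
    also have "(\<Sum>c<r. al c * Gm k c) = bv k" using eqs[OF k] by (simp add: mult.commute)
    finally show ?thesis by simp
  qed
  have orth: "inner_n n d v = 0" if v: "v \<in> X" for v
  proof -
    obtain a where a: "v = (\<lambda>i. \<Sum>k<r. a k * restr J (vpow x k) i)" using v unfolding X_def XJ_def by auto
    have "inner_n n d v = (\<Sum>j\<in>J. d j * v j)" by (rule inner_supp[OF J(1) dsupp])
    also have "\<dots> = (\<Sum>j\<in>J. \<Sum>k<r. a k * (d j * x j ^ k))"
      by (rule sum.cong[OF refl]) (simp add: a restr_def vpow_def sum_distrib_left algebra_simps)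
    also have "\<dots> = (\<Sum>k<r. a k * (\<Sum>j\<in>J. d j * x j ^ k))"
      by (simp add: sum.swap[of _ J] sum_distrib_left)
    also have "\<dots> = 0" by (simp add: dk)
    finally show ?thesis .
  qed
  have proj: "proj_n n X u = p"
    unfolding proj_n_def
  proof (rule the_equality)
    show "p \<in> X \<and> (\<forall>v\<in>X. inner_n n (\<lambda>i. u i - p i) v = 0)"
      using pX orth unfolding d_def by auto
  next
    fix q assume q: "q \<in> X \<and> (\<forall>v\<in>X. inner_n n (\<lambda>i. u i - q i) v = 0)"
    obtain a where a: "q = (\<lambda>i. \<Sum>k<r. a k * restr J (vpow x k) i)" using q unfolding X_def XJ_def by auto
    define z where "z = (\<lambda>i. p i - q i)"
    have zX: "z \<in> X" unfolding X_def XJ_def z_def p_def a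
      by (rule CollectI, rule exI[of _ "\<lambda>k. al k - a k"]) (simp add: sum_subtractf algebra_simps)
    have "inner_n n z z = inner_n n (\<lambda>i. u i - q i) z - inner_n n (\<lambda>i. u i - p i) z"
      unfolding inner_n_def z_def by (simp add: sum_subtractf[symmetric] algebra_simps)
    also have "\<dots> = 0" using q zX orth[OF zX] unfolding d_def by simp
    finally have "(\<Sum>i=1..n. z i * z i) = 0" unfolding inner_n_def .
    hence z0: "\<forall>i\<in>{1..n}. z i * z i = 0" by (subst (asm) sum_nonneg_eq_0_iff) auto
    show "q = p"
    proof
      fix i show "q i = p i"
      proof (cases "i \<in> {1..n}")
        case True thus ?thesis using z0 unfolding z_def by simp
      next
        case False
        hence "i \<notin> J" using J(1) by auto
        thus ?thesis using Xsupp[OF pX] Xsupp[of q i] q by simp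
      qed
    qed
  qed
  have resid: "residJ n x r R J = star R x d"
    unfolding residJ_def d_def proj[unfolded X_def u_def] u_def ..
  define \<gamma> where "\<gamma> = gammaJ n x r R J"
  define w where "w = star R x f"
  define S where "S = (\<Sum>j\<in>J. w j * d j)"
  have lhs: "- inner_n n f (tJ n x r R J) = S / \<gamma>"
  proof -
    have "- inner_n n f (tJ n x r R J) = (\<Sum>i=1..n. d i * w i) / \<gamma>"
      unfolding tJ_def resid inner_n_def \<gamma>_def[symmetric] w_def star_def
      by (simp add: sum_divide_distrib sum_negf[symmetric] algebra_simps)
    also have "(\<Sum>i=1..n. d i * w i) = (\<Sum>j\<in>J. d j * w j)"
      using inner_supp[OF J(1) dsupp, where b=w] unfolding inner_n_def .
    finally show ?thesis unfolding S_def by (simp add: mult.commute)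
  qed
  define Lset where "Lset = {xs \<in> Ir n r. set xs \<subseteq> J}"
  have Lset_eq: "Lset = {xs. length xs = Suc r \<and> sorted_wrt (<) xs \<and> set xs \<subseteq> J}"
    unfolding Lset_def Ir_def using J(1) by auto
  have phid: "phi x r xs (vpow x r) = phi x r xs d" if xs: "xs \<in> Lset" for xs
  proof -
    have l: "length xs = Suc r" "set xs \<subseteq> J" using xs unfolding Lset_eq by auto
    have "phi x r xs (vpow x r) = phi x r xs (\<lambda>i. d i + p i)"
      by (rule phi_local[OF l(1)]) (use l(2) in \<open>auto simp: d_def u_def restr_def\<close>)
    also have "\<dots> = phi x r xs d + phi x r xs p" by (rule phi_add)
    also have "phi x r xs p = (\<Sum>k<r. al k * phi x r xs (restr J (vpow x k)))"
      unfolding p_def by (subst phi_sum) (auto simp: phi_scale)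
    also have "\<dots> = 0"
    proof (rule sum.neutral, intro ballI)
      fix k assume "k \<in> {..<r}"
      have "phi x r xs (restr J (vpow x k)) = phi x r xs (vpow x k)"
        by (rule phi_local[OF l(1)]) (use l(2) in \<open>auto simp: restr_def\<close>)
      also have "\<dots> = 0" using \<open>k \<in> {..<r}\<close> by (simp add: phi_pow_low)
      finally show "al k * phi x r xs (restr J (vpow x k)) = 0" by simp
    qed
    finally show ?thesis by simp
  qed
  define A where "A = (\<lambda>j a. if a < r then x j ^ a else w j)"
  define Bf where "Bf = (\<lambda>j b. if b < r then x j ^ b else d j)"
  have "(\<Sum>xs\<in>Lset. phi x r xs w * phi x r xs (vpow x r)) = (\<Sum>xs\<in>Lset. phi x r xs w * phi x r xs d)"
    by (rule sum.cong[OF refl]) (simp add: phid)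
  also have "\<dots> = (\<Sum>xs\<in>Lset. detn (Suc r) (\<lambda>i a. A (xs!i) a) * detn (Suc r) (\<lambda>i b. Bf (xs!i) b))"
    unfolding phi_def A_def Bf_def ..
  also have "\<dots> = detn (Suc r) (\<lambda>a b. \<Sum>j\<in>J. A j a * Bf j b)"
    unfolding Lset_eq by (rule cauchy_binet[OF finJ, symmetric])
  also have "\<dots> = (\<Sum>j\<in>J. A j r * Bf j r) * detn r (\<lambda>a b. \<Sum>j\<in>J. A j a * Bf j b)"
  proof (rule detn_last_col_zero)
    fix a assume a: "a < r"
    have "(\<Sum>j\<in>J. A j a * Bf j r) = (\<Sum>j\<in>J. d j * x j ^ a)"
      using a unfolding A_def Bf_def by (simp add: mult.commute)
    thus "(\<Sum>j\<in>J. A j a * Bf j r) = 0" using dk[OF a] by simp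
  qed
  also have "(\<Sum>j\<in>J. A j r * Bf j r) = S" unfolding A_def Bf_def S_def by simp
  also have "detn r (\<lambda>a b. \<Sum>j\<in>J. A j a * Bf j b) = detn r Gm"
    by (rule detn_cong) (simp add: A_def Bf_def Gm_def)
  finally have rhs: "(\<Sum>xs\<in>Lset. phi x r xs w * phi x r xs (vpow x r)) = S * detn r Gm" .
  have gram: "gram n r (\<lambda>k. restr J (vpow x k)) = detn r Gm"
    unfolding gram_def
  proof (rule detn_cong)
    fix a b assume "a < r" "b < r"
    have "inner_n n (restr J (vpow x a)) (restr J (vpow x b)) = (\<Sum>j\<in>J. restr J (vpow x a) j * restr J (vpow x b) j)"
      by (rule inner_supp[OF J(1)]) (simp add: restr_def)
    also have "\<dots> = Gm a b" unfolding Gm_def by (rule sum.cong) (auto simp: restr_def vpow_def)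
    finally show "inner_n n (restr J (vpow x a)) (restr J (vpow x b)) = Gm a b" .
  qed
  have NJ: "NJ n x r R J = detn r Gm * \<gamma>" unfolding NJ_def gram \<gamma>_def ..
  show ?thesis
    unfolding lhs NJ Lset_def[symmetric] w_def[symmetric] rhs
    using G0 by (cases "\<gamma> = 0") (simp_all add: field_simps)
qed

end

theorem lemma2:
  fixes n r :: nat and x :: "nat \<Rightarrow> real" and R :: "real \<Rightarrow> real"
  assumes x0: "0 \<le> x 1" and x1: "x n \<le> 1"
    and xinc: "\<And>i j. 1 \<le> i \<Longrightarrow> i < j \<Longrightarrow> j \<le> n \<Longrightarrow> x i < x j"
    and r: "1 \<le> r" "r \<le> n - 1"
    and Rsmooth: "smooth01 R"
    and Rnz: "\<And>t. t \<in> {0..1} \<Longrightarrow> R t \<noteq> 0"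
  shows
    "Ctilde n x r R = Ccons n x r R
     \<and> (\<forall>F D f. D 0 = (\<lambda>t. R t * F t)
          \<longrightarrow> (\<forall>k<r. \<forall>t\<in>{0..1}. (D k has_real_derivative D (Suc k) t) (at t within {0..1}))
          \<longrightarrow> f = (\<lambda>i. if i \<in> {1..n} then F (x i) else 0)
          \<longrightarrow> (\<forall>is \<in> Ir n r. \<exists>c. x (is ! 0) < c \<and> c < x (is ! r) \<and>
                 phi x r is (star R x f) = D r c / fact r * phi x r is (vpow x r)))
     \<and> (\<forall>J f. J \<subseteq> {1..n} \<longrightarrow> card J \<ge> Suc r \<longrightarrow> f \<in> vecs n \<longrightarrow>
          - inner_n n f (tJ n x r R J)
          = (1 / NJ n x r R J) *
            (\<Sum>is \<in> {is \<in> Ir n r. set is \<subseteq> J}. phi x r is (star R x f) * phi x r is (vpow x r)))"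
  proof -
  have xinc': "\<And>i j. 1 \<le> i \<Longrightarrow> i < j \<Longrightarrow> j \<le> n \<Longrightarrow> x i < x j" by (rule xinc)
  have A: "Ctilde n x r R = Ccons n x r R" by (rule partA[OF xinc'])
  have B: "\<forall>F D f. D 0 = (\<lambda>t. R t * F t)
          \<longrightarrow> (\<forall>k<r. \<forall>t\<in>{0..1}. (D k has_real_derivative D (Suc k) t) (at t within {0..1}))
          \<longrightarrow> f = (\<lambda>i. if i \<in> {1..n} then F (x i) else 0)
          \<longrightarrow> (\<forall>is \<in> Ir n r. \<exists>c. x (is ! 0) < c \<and> c < x (is ! r) \<and>
                 phi x r is (star R x f) = D r c / fact r * phi x r is (vpow x r))"
  proof (intro allI impI ballI)
    fix F D f xs
    assume D0: "D 0 = (\<lambda>t. R t * F t)"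
      and der: "\<forall>k<r. \<forall>t\<in>{0..1}. (D k has_real_derivative D (Suc k) t) (at t within {0..1})"
      and fdef: "f = (\<lambda>i. if i \<in> {1..n} then F (x i) else 0)"
      and xs: "xs \<in> Ir n r"
    show "\<exists>c. x (xs ! 0) < c \<and> c < x (xs ! r) \<and>
                 phi x r xs (star R x f) = D r c / fact r * phi x r xs (vpow x r)"
      by (rule partB[OF xinc' x0 x1 r(1) der D0 fdef xs])
  qed
  have C: "\<forall>J f. J \<subseteq> {1..n} \<longrightarrow> card J \<ge> Suc r \<longrightarrow> f \<in> vecs n \<longrightarrow>
          - inner_n n f (tJ n x r R J)
          = (1 / NJ n x r R J) *
            (\<Sum>is \<in> {is \<in> Ir n r. set is \<subseteq> J}. phi x r is (star R x f) * phi x r is (vpow x r))"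
  proof (intro allI impI)
    fix J f assume J: "J \<subseteq> {1..n}" "card J \<ge> Suc r" "f \<in> vecs n"
    show "- inner_n n f (tJ n x r R J)
          = (1 / NJ n x r R J) *
            (\<Sum>is \<in> {is \<in> Ir n r. set is \<subseteq> J}. phi x r is (star R x f) * phi x r is (vpow x r))"
      by (rule partC[OF xinc' J(1) J(2)])
  qed
  show ?thesis by (rule conjI[OF A conjI[OF B C]])
qed

end
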